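(* Let $p$ be a prime and let $L$ be a finitely generated pro-$p$ group. Suppose that $M$ is an abelian normal subgroup of $L$ equal to the normal closure $M=\langle T^L\rangle$ of a finite set $T$ consisting of right Engel elements of $L$, and that $L/M$ is nilpotent. Then $L$ is nilpotent.
   Context: An element $g$ of a group $L$ is right Engel if for every $x\in L$ there is $n=n(g,x)$ with $[g,{}_nx]=1$, where $[y,{}_0x]=y$ and $[y,{}_{i+1}x]=[[y,{}_ix],x]$. Subgroups, normal closures and generation are in the topological (closed) sense. *)

theory Defs
  imports "HOL-Analysis.Analysis" "HOL-Algebra.Algebra"
begin

definition topological_group :: "('a, 'b) monoid_scheme \<Rightarrow> 'a topology \<Rightarrow> bool" where
  "topological_group G T \<longleftrightarrow> group G \<and> topspace T = carrier G \<and>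
     continuous_map (prod_topology T T) T (\<lambda>(x, y). x \<otimes>\<^bsub>G\<^esub> y) \<and>
     continuous_map T T (\<lambda>x. inv\<^bsub>G\<^esub> x)"

definition pro_p_group :: "nat \<Rightarrow> ('a, 'b) monoid_scheme \<Rightarrow> 'a topology \<Rightarrow> bool" where
  "pro_p_group p G T \<longleftrightarrow> topological_group G T \<and> compact_space T \<and> Hausdorff_space T \<and>
     (\<forall>x \<in> topspace T. connected_component_of_set T x = {x}) \<and>
     (\<forall>N. N \<lhd> G \<and> openin T N \<longrightarrow> (\<exists>k. card (rcosets\<^bsub>G\<^esub> N) = p ^ k))"

definition top_fin_gen :: "('a, 'b) monoid_scheme \<Rightarrow> 'a topology \<Rightarrow> bool" where
  "top_fin_gen G T \<longleftrightarrow> (\<exists>A. finite A \<and> A \<subseteq> carrier G \<and> (T closure_of (generate G A)) = carrier G)"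

definition top_normal_closure :: "('a, 'b) monoid_scheme \<Rightarrow> 'a topology \<Rightarrow> 'a set \<Rightarrow> 'a set" where
  "top_normal_closure G T S =
     T closure_of (generate G (\<Union>g \<in> carrier G. (\<lambda>s. inv\<^bsub>G\<^esub> g \<otimes>\<^bsub>G\<^esub> s \<otimes>\<^bsub>G\<^esub> g) ` S))"

definition gcomm :: "('a, 'b) monoid_scheme \<Rightarrow> 'a \<Rightarrow> 'a \<Rightarrow> 'a" where
  "gcomm G x y = inv\<^bsub>G\<^esub> x \<otimes>\<^bsub>G\<^esub> inv\<^bsub>G\<^esub> y \<otimes>\<^bsub>G\<^esub> x \<otimes>\<^bsub>G\<^esub> y"

primrec engel_comm :: "('a, 'b) monoid_scheme \<Rightarrow> 'a \<Rightarrow> nat \<Rightarrow> 'a \<Rightarrow> 'a" where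
  "engel_comm G y 0 x = y"
| "engel_comm G y (Suc i) x = gcomm G (engel_comm G y i x) x"

definition right_engel :: "('a, 'b) monoid_scheme \<Rightarrow> 'a \<Rightarrow> bool" where
  "right_engel G g \<longleftrightarrow> (\<forall>x \<in> carrier G. \<exists>n. engel_comm G g n x = \<one>\<^bsub>G\<^esub>)"

primrec lower_central :: "('a, 'b) monoid_scheme \<Rightarrow> nat \<Rightarrow> 'a set" where
  "lower_central G 0 = carrier G"
| "lower_central G (Suc i) =
     generate G {gcomm G a b | a b. a \<in> lower_central G i \<and> b \<in> carrier G}"

definition nilpotent_group :: "('a, 'b) monoid_scheme \<Rightarrow> bool" where
  "nilpotent_group G \<longleftrightarrow> (\<exists>n. lower_central G n = {\<one>\<^bsub>G\<^esub>})"

end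

theory Submission
  imports Defs
begin



definition cj :: "('a,'b) monoid_scheme \<Rightarrow> 'a \<Rightarrow> 'a \<Rightarrow> 'a" where
  "cj G h x = inv\<^bsub>G\<^esub> h \<otimes>\<^bsub>G\<^esub> x \<otimes>\<^bsub>G\<^esub> h"

definition cl :: "('a,'b) monoid_scheme \<Rightarrow> 'a \<Rightarrow> 'a list \<Rightarrow> 'a" where
  "cl G m ys = foldl (\<lambda>m y. gcomm G m y) m ys"

lemma cl_Nil[simp]: "cl G m [] = m" by (simp add: cl_def)
lemma cl_Cons[simp]: "cl G m (y#ys) = cl G (gcomm G m y) ys" by (simp add: cl_def)
lemma cl_append: "cl G m (xs @ ys) = cl G (cl G m xs) ys" by (simp add: cl_def)

lemma engel_comm_cl: "engel_comm G y n x = cl G y (replicate n x)"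
proof (induction n)
  case 0 then show ?case by simp
next
  case (Suc n)
  have "replicate (Suc n) x = replicate n x @ [x]" by (simp add: replicate_append_same)
  then show ?case using Suc by (simp add: cl_append)
qed

context group begin

lemma gcomm_closed[simp]: "x \<in> carrier G \<Longrightarrow> y \<in> carrier G \<Longrightarrow> gcomm G x y \<in> carrier G"
  by (simp add: gcomm_def)

lemma cj_closed[simp]: "h \<in> carrier G \<Longrightarrow> x \<in> carrier G \<Longrightarrow> cj G h x \<in> carrier G"
  by (simp add: cj_def)

lemma gcomm_one_left[simp]: "y \<in> carrier G \<Longrightarrow> gcomm G \<one> y = \<one>"
  by (simp add: gcomm_def)

lemma gcomm_one_right[simp]: "y \<in> carrier G \<Longrightarrow> gcomm G y \<one> = \<one>"
  by (simp add: gcomm_def)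

lemma gcomm_alt: "x \<in> carrier G \<Longrightarrow> y \<in> carrier G \<Longrightarrow> gcomm G x y = inv x \<otimes> cj G y x"
  by (simp add: gcomm_def cj_def m_assoc)

lemma cj_mult: "h \<in> carrier G \<Longrightarrow> x \<in> carrier G \<Longrightarrow> y \<in> carrier G \<Longrightarrow>
   cj G h (x \<otimes> y) = cj G h x \<otimes> cj G h y"
  by (simp add: cj_def m_assoc r_inv[symmetric] del: r_inv) (simp add: m_assoc[symmetric] r_inv)

lemma cj_inv: "h \<in> carrier G \<Longrightarrow> x \<in> carrier G \<Longrightarrow> cj G h (inv x) = inv (cj G h x)"
  by (simp add: cj_def inv_mult_group m_assoc)

lemma cj_one[simp]: "x \<in> carrier G \<Longrightarrow> cj G \<one> x = x"
  by (simp add: cj_def)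

lemma cj_one2[simp]: "h \<in> carrier G \<Longrightarrow> cj G h \<one> = \<one>"
  by (simp add: cj_def)

lemma cj_cj: "g \<in> carrier G \<Longrightarrow> h \<in> carrier G \<Longrightarrow> x \<in> carrier G \<Longrightarrow>
   cj G h (cj G g x) = cj G (g \<otimes> h) x"
  by (simp add: cj_def inv_mult_group m_assoc)

lemma cj_inv_cancel1[simp]: "h \<in> carrier G \<Longrightarrow> x \<in> carrier G \<Longrightarrow> cj G (inv h) (cj G h x) = x"
  by (simp add: cj_cj)

lemma cj_inv_cancel2[simp]: "h \<in> carrier G \<Longrightarrow> x \<in> carrier G \<Longrightarrow> cj G h (cj G (inv h) x) = x"
  by (simp add: cj_cj)

lemma cj_gcomm: "h \<in> carrier G \<Longrightarrow> x \<in> carrier G \<Longrightarrow> y \<in> carrier G \<Longrightarrow>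
   cj G h (gcomm G x y) = gcomm G (cj G h x) (cj G h y)"
  by (simp add: gcomm_def cj_mult cj_inv)

lemma gcomm_mult_right: "m \<in> carrier G \<Longrightarrow> g \<in> carrier G \<Longrightarrow> h \<in> carrier G \<Longrightarrow>
   gcomm G m (g \<otimes> h) = gcomm G m h \<otimes> cj G h (gcomm G m g)"
  apply (simp add: gcomm_def cj_def inv_mult_group m_assoc)
  apply (simp add: m_assoc[symmetric])
  done

lemma gcomm_inv_right: "m \<in> carrier G \<Longrightarrow> g \<in> carrier G \<Longrightarrow>
   gcomm G m (inv g) = inv (gcomm G (cj G (inv g) m) g)"
  by (simp add: gcomm_def cj_def inv_mult_group m_assoc)

lemma gcomm_inv_right2: "z \<in> carrier G \<Longrightarrow> g \<in> carrier G \<Longrightarrow>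
   gcomm G z (inv g) = inv (cj G (inv g) (gcomm G z g))"
  by (simp add: gcomm_def cj_def inv_mult_group m_assoc)

lemma cl_closed[simp]: "m \<in> carrier G \<Longrightarrow> set ys \<subseteq> carrier G \<Longrightarrow> cl G m ys \<in> carrier G"
  by (induction ys arbitrary: m) auto

lemma cl_one[simp]: "set ys \<subseteq> carrier G \<Longrightarrow> cl G \<one> ys = \<one>"
  by (induction ys) auto

lemma cl_cj: "h \<in> carrier G \<Longrightarrow> m \<in> carrier G \<Longrightarrow> set ys \<subseteq> carrier G \<Longrightarrow>
   cj G h (cl G m ys) = cl G (cj G h m) (map (cj G h) ys)"
  by (induction ys arbitrary: m) (auto simp: cj_gcomm)

lemma conj_conj_elim: "z \<in> carrier G \<Longrightarrow> h \<in> carrier G \<Longrightarrow>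
   cj G (inv h) z = z \<otimes> gcomm G z (inv h)"
  by (simp add: gcomm_def cj_def m_assoc[symmetric])

end



context group begin
lemma canc1[simp]: "x \<in> carrier G \<Longrightarrow> y \<in> carrier G \<Longrightarrow> x \<otimes> (inv x \<otimes> y) = y"
  by (simp add: m_assoc[symmetric])
lemma canc2[simp]: "x \<in> carrier G \<Longrightarrow> y \<in> carrier G \<Longrightarrow> inv x \<otimes> (x \<otimes> y) = y"
  by (simp add: m_assoc[symmetric])
end

locale abn = group L for L (structure) +
  fixes M
  assumes Mnormal: "M \<lhd> L"
    and Mab: "\<forall>a\<in>M. \<forall>b\<in>M. a \<otimes> b = b \<otimes> a"
begin

lemma M_subgroup: "subgroup M L" using Mnormal normal_imp_subgroup by blast
lemma M_sub: "M \<subseteq> carrier L" using M_subgroup subgroup.subset by blast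
lemma M_car: "m \<in> M \<Longrightarrow> m \<in> carrier L" using M_sub by blast
lemma M_mult: "a \<in> M \<Longrightarrow> b \<in> M \<Longrightarrow> a \<otimes> b \<in> M" by (rule subgroup.m_closed[OF M_subgroup])
lemma M_inv: "a \<in> M \<Longrightarrow> inv a \<in> M" by (rule subgroup.m_inv_closed[OF M_subgroup])
lemma M_one: "\<one> \<in> M" using M_subgroup subgroup.one_closed by blast
lemma M_comm: "a \<in> M \<Longrightarrow> b \<in> M \<Longrightarrow> a \<otimes> b = b \<otimes> a" using Mab by blast

lemma cj_M: "h \<in> carrier L \<Longrightarrow> m \<in> M \<Longrightarrow> cj L h m \<in> M"
  unfolding cj_def using normal.inv_op_closed1[OF Mnormal] by blast

lemma gcomm_M: "m \<in> M \<Longrightarrow> y \<in> carrier L \<Longrightarrow> gcomm L m y \<in> M"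
  by (simp add: gcomm_alt M_car M_mult M_inv cj_M)

lemma gcomm_hom: assumes "m \<in> M" "m' \<in> M" "y \<in> carrier L"
  shows "gcomm L (m \<otimes> m') y = gcomm L m y \<otimes> gcomm L m' y"
proof -
  have c: "m \<in> carrier L" "m' \<in> carrier L" using assms M_car by auto
  have X: "inv m \<otimes> cj L y m \<in> M" by (simp add: assms M_mult M_inv cj_M)
  have "gcomm L (m \<otimes> m') y = inv m' \<otimes> ((inv m \<otimes> cj L y m) \<otimes> cj L y m')"
    using c assms by (simp add: gcomm_alt cj_mult inv_mult_group m_assoc)
  also have "\<dots> = (inv m' \<otimes> (inv m \<otimes> cj L y m)) \<otimes> cj L y m'"
    using c assms by (simp add: m_assoc)
  also have "\<dots> = ((inv m \<otimes> cj L y m) \<otimes> inv m') \<otimes> cj L y m'"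
    using M_comm[OF M_inv[OF assms(2)] X] by simp
  also have "\<dots> = gcomm L m y \<otimes> gcomm L m' y"
    using c assms by (simp add: gcomm_alt m_assoc)
  finally show ?thesis .
qed

lemma gcomm_inv_M: assumes "m \<in> M" "y \<in> carrier L"
  shows "gcomm L (inv m) y = inv (gcomm L m y)"
proof -
  have "gcomm L (inv m) y \<otimes> gcomm L m y = \<one>"
    using gcomm_hom[OF M_inv[OF assms(1)] assms(1) assms(2)] assms M_car by simp
  then show ?thesis using assms M_car
    by (metis gcomm_closed inv_closed inv_equality inv_inv l_inv)
qed

lemma gcomm_MM: "m \<in> M \<Longrightarrow> w \<in> M \<Longrightarrow> gcomm L m w = \<one>"
  unfolding gcomm_def using M_comm[of m w] M_car
  by (metis M_inv inv_mult_group l_inv m_assoc m_closed inv_closed)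

lemma cl_M: "m \<in> M \<Longrightarrow> set ys \<subseteq> carrier L \<Longrightarrow> cl L m ys \<in> M"
  by (induction ys arbitrary: m) (auto simp: gcomm_M)

lemma cl_hom: "m \<in> M \<Longrightarrow> m' \<in> M \<Longrightarrow> set ys \<subseteq> carrier L \<Longrightarrow>
   cl L (m \<otimes> m') ys = cl L m ys \<otimes> cl L m' ys"
  by (induction ys arbitrary: m m') (auto simp: gcomm_hom gcomm_M)

lemma cl_inv: "m \<in> M \<Longrightarrow> set ys \<subseteq> carrier L \<Longrightarrow> cl L (inv m) ys = inv (cl L m ys)"
  by (induction ys arbitrary: m) (auto simp: gcomm_inv_M gcomm_M)

lemma pre_subgroup:
  assumes "subgroup Q L" "set ys \<subseteq> carrier L"
  shows "subgroup {m \<in> M. cl L m ys \<in> Q} L"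
proof (rule subgroupI)
  show "{m \<in> M. cl L m ys \<in> Q} \<subseteq> carrier L" using M_sub by auto
  show "{m \<in> M. cl L m ys \<in> Q} \<noteq> {}" using M_one assms subgroup.one_closed by fastforce
  fix a b assume a: "a \<in> {m \<in> M. cl L m ys \<in> Q}" and b: "b \<in> {m \<in> M. cl L m ys \<in> Q}"
  show "inv a \<in> {m \<in> M. cl L m ys \<in> Q}"
    using a assms by (auto simp: cl_inv M_inv subgroup.m_inv_closed)
  show "a \<otimes> b \<in> {m \<in> M. cl L m ys \<in> Q}"
    using a b assms by (auto simp: cl_hom M_mult subgroup.m_closed)
qed

lemma pre_subgroup_all:
  assumes "subgroup Q L" "\<And>ys. ys \<in> Ys \<Longrightarrow> set ys \<subseteq> carrier L"
  shows "subgroup {m \<in> M. \<forall>ys\<in>Ys. cl L m ys \<in> Q} L"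
proof (rule subgroupI)
  show "{m \<in> M. \<forall>ys\<in>Ys. cl L m ys \<in> Q} \<subseteq> carrier L" using M_sub by auto
  show "{m \<in> M. \<forall>ys\<in>Ys. cl L m ys \<in> Q} \<noteq> {}" using M_one assms subgroup.one_closed by fastforce
  fix a b assume a: "a \<in> {m \<in> M. \<forall>ys\<in>Ys. cl L m ys \<in> Q}" and b: "b \<in> {m \<in> M. \<forall>ys\<in>Ys. cl L m ys \<in> Q}"
  show "inv a \<in> {m \<in> M. \<forall>ys\<in>Ys. cl L m ys \<in> Q}"
    using a assms by (auto simp: cl_inv M_inv subgroup.m_inv_closed)
  show "a \<otimes> b \<in> {m \<in> M. \<forall>ys\<in>Ys. cl L m ys \<in> Q}"
    using a b assms by (auto simp: cl_hom M_mult subgroup.m_closed)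
qed

lemma M_lcomm: "a \<in> M \<Longrightarrow> b \<in> M \<Longrightarrow> c \<in> M \<Longrightarrow> a \<otimes> (b \<otimes> c) = b \<otimes> (a \<otimes> c)"
  by (metis M_car M_comm m_assoc)
lemma M_can1: "a \<in> M \<Longrightarrow> b \<in> M \<Longrightarrow> a \<otimes> (inv a \<otimes> b) = b"
  by (simp add: M_car m_assoc[symmetric])
lemma M_can2: "a \<in> M \<Longrightarrow> b \<in> M \<Longrightarrow> inv a \<otimes> (a \<otimes> b) = b"
  by (simp add: M_car m_assoc[symmetric])


lemma M_can3: "a \<in> M \<Longrightarrow> b \<in> M \<Longrightarrow> a \<otimes> (b \<otimes> inv a) = b"
  by (metis M_can1 M_comm M_inv M_mult)
lemma M_can4: "a \<in> M \<Longrightarrow> b \<in> M \<Longrightarrow> inv a \<otimes> (b \<otimes> a) = b"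
  by (metis M_can2 M_comm M_inv M_mult)
lemma M_can5: "a \<in> M \<Longrightarrow> b \<in> M \<Longrightarrow> c \<in> M \<Longrightarrow> a \<otimes> (b \<otimes> (c \<otimes> inv a)) = b \<otimes> c"
  by (simp add: M_lcomm[of a b] M_can3 M_inv M_mult)
lemma M_can6: "a \<in> M \<Longrightarrow> b \<in> M \<Longrightarrow> c \<in> M \<Longrightarrow> inv a \<otimes> (b \<otimes> (c \<otimes> a)) = b \<otimes> c"
  by (simp add: M_lcomm[of "inv a" b] M_can4 M_inv M_mult)
lemma M_can7: "a \<in> M \<Longrightarrow> b \<in> M \<Longrightarrow> c \<in> M \<Longrightarrow> a \<otimes> (b \<otimes> (inv a \<otimes> c)) = b \<otimes> c"
  by (simp add: M_lcomm[of a b] M_can1 M_inv M_mult)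
lemma M_can8: "a \<in> M \<Longrightarrow> b \<in> M \<Longrightarrow> c \<in> M \<Longrightarrow> inv a \<otimes> (b \<otimes> (a \<otimes> c)) = b \<otimes> c"
  by (simp add: M_lcomm[of "inv a" b] M_can2 M_inv M_mult)
lemma M_can9: "a \<in> M \<Longrightarrow> b \<in> M \<Longrightarrow> c \<in> M \<Longrightarrow> d \<in> M \<Longrightarrow> a \<otimes> (b \<otimes> (c \<otimes> (d \<otimes> inv a))) = b \<otimes> (c \<otimes> d)"
  by (simp add: M_lcomm[of a b] M_can5 M_inv M_mult)
lemma M_can10: "a \<in> M \<Longrightarrow> b \<in> M \<Longrightarrow> c \<in> M \<Longrightarrow> d \<in> M \<Longrightarrow> inv a \<otimes> (b \<otimes> (c \<otimes> (d \<otimes> a))) = b \<otimes> (c \<otimes> d)"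
  by (simp add: M_lcomm[of "inv a" b] M_can6 M_inv M_mult)
lemmas M_simps = M_car inv_mult_group m_assoc M_comm M_lcomm M_inv M_mult M_can1 M_can2 M_can3 M_can4 M_can5 M_can6 M_can7 M_can8 M_can9 M_can10

lemma ac_ident: assumes "A \<in> M" "B \<in> M" "C \<in> M" "D \<in> M" "E \<in> M"
  shows "inv (inv A \<otimes> B) \<otimes> (inv C \<otimes> D) = (inv (inv A \<otimes> C) \<otimes> (inv B \<otimes> E)) \<otimes> (inv E \<otimes> D)"
  using assms by (simp add: M_simps)

lemma comm_ident:
  assumes m: "m \<in> M" and y: "y \<in> carrier L" and z: "z \<in> carrier L"
  shows "gcomm L (gcomm L m z) y = gcomm L (gcomm L m y) z \<otimes> gcomm L (cj L (y \<otimes> z) m) (gcomm L z y)"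
proof -
  have e: "(y \<otimes> z) \<otimes> gcomm L z y = z \<otimes> y"
    using y z by (simp add: gcomm_def m_assoc)
  have k: "cj L (gcomm L z y) (cj L (y \<otimes> z) m) = cj L (z \<otimes> y) m"
    using y z m M_car by (simp add: cj_cj e)
  have mc: "m \<in> carrier L" using m M_car by auto
  have yz: "y \<otimes> z \<in> carrier L" "z \<otimes> y \<in> carrier L" using y z by auto
  have AM: "m \<in> M" "cj L z m \<in> M" "cj L y m \<in> M" "cj L (z \<otimes> y) m \<in> M" "cj L (y \<otimes> z) m \<in> M"
    using m y z yz by (auto simp: cj_M)
  have 1: "gcomm L m z = inv m \<otimes> cj L z m" "gcomm L m y = inv m \<otimes> cj L y m"
    using mc y z by (auto simp: gcomm_alt)
  have 2: "gcomm L (gcomm L m z) y = inv (inv m \<otimes> cj L z m) \<otimes> (inv (cj L y m) \<otimes> cj L (z \<otimes> y) m)"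
    using mc y z by (simp add: 1 gcomm_alt cj_mult cj_inv cj_cj)
  have 3: "gcomm L (gcomm L m y) z = inv (inv m \<otimes> cj L y m) \<otimes> (inv (cj L z m) \<otimes> cj L (y \<otimes> z) m)"
    using mc y z by (simp add: 1 gcomm_alt cj_mult cj_inv cj_cj)
  have 4: "gcomm L (cj L (y \<otimes> z) m) (gcomm L z y) = inv (cj L (y \<otimes> z) m) \<otimes> cj L (z \<otimes> y) m"
    using mc y z gcomm_alt[of "cj L (y \<otimes> z) m" "gcomm L z y"] k by simp
  show ?thesis unfolding 2 3 4 by (rule ac_ident[OF AM(1,2,3,4,5)])
qed

end

locale core = abn +
  fixes H Y
  assumes Ysub: "Y \<subseteq> carrier L" and Hdef: "H = generate L Y"
begin

lemma H_subgroup: "subgroup H L" using Hdef generate_is_subgroup Ysub by simp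
lemma H_car: "h \<in> H \<Longrightarrow> h \<in> carrier L" by (rule subgroup.mem_carrier[OF H_subgroup])
lemma H_mult: "a \<in> H \<Longrightarrow> b \<in> H \<Longrightarrow> a \<otimes> b \<in> H" by (rule subgroup.m_closed[OF H_subgroup])
lemma H_inv: "a \<in> H \<Longrightarrow> inv a \<in> H" by (rule subgroup.m_inv_closed[OF H_subgroup])
lemma H_one: "\<one> \<in> H" by (rule subgroup.one_closed[OF H_subgroup])

definition hsub where "hsub P \<longleftrightarrow> P \<subseteq> M \<and> subgroup P L \<and> (\<forall>h\<in>H. \<forall>x\<in>P. cj L h x \<in> P)"
definition Ker where "Ker P Q = {g \<in> H. \<forall>m\<in>P. gcomm L m g \<in> Q}"
definition orb where "orb b = {cj L h b | h. h \<in> H}"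
definition Hl where "Hl K = {ys. set ys \<subseteq> H \<and> length ys = K}"
definition eng where "eng Q a \<longleftrightarrow> (\<forall>y\<in>H. \<exists>n. cl L a (replicate n y) \<in> Q)"
definition Claim where "Claim G \<longleftrightarrow> (\<forall>Q a. hsub Q \<longrightarrow> a \<in> M \<longrightarrow> eng Q a \<longrightarrow>
    G \<subseteq> Ker (generate L (orb a)) Q \<longrightarrow> (\<exists>K. \<forall>ys\<in>Hl K. cl L a ys \<in> Q))"

lemma Hl_car: "ys \<in> Hl K \<Longrightarrow> set ys \<subseteq> carrier L"
  unfolding Hl_def using H_car by auto

lemma gen_inv:
  assumes S: "S \<subseteq> carrier L" and invS: "\<forall>h\<in>H. \<forall>x\<in>S. cj L h x \<in> S"
    and x: "x \<in> generate L S" and h: "h \<in> H"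
  shows "cj L h x \<in> generate L S"
  using x
proof induction
  case one then show ?case using h H_car by (simp add: generate.one)
next
  case (incl x) then show ?case using invS h by (simp add: generate.incl)
next
  case (inv x)
  then have "cj L h (inv x) = inv (cj L h x)" using h H_car S cj_inv by auto
  then show ?case using invS inv h by (simp add: generate.inv)
next
  case (eng x1 x2) then show ?case using h H_car S
    by (simp add: cj_mult generate_in_carrier generate.eng)
qed

lemma hsub_gen: "S \<subseteq> M \<Longrightarrow> \<forall>h\<in>H. \<forall>x\<in>S. cj L h x \<in> S \<Longrightarrow> hsub (generate L S)"
  unfolding hsub_def using generate_subgroup_incl[OF _ M_subgroup] generate_is_subgroup M_sub gen_inv
  by (meson order_trans)

lemma hsub_sub: "hsub P \<Longrightarrow> P \<subseteq> M" by (simp add: hsub_def)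
lemma hsub_subgroup: "hsub P \<Longrightarrow> subgroup P L" by (simp add: hsub_def)
lemma hsub_cj: "hsub P \<Longrightarrow> h \<in> H \<Longrightarrow> x \<in> P \<Longrightarrow> cj L h x \<in> P" by (simp add: hsub_def)
lemma hsub_mult: "hsub P \<Longrightarrow> a \<in> P \<Longrightarrow> b \<in> P \<Longrightarrow> a \<otimes> b \<in> P"
  by (rule subgroup.m_closed[OF hsub_subgroup])
lemma hsub_inv: "hsub P \<Longrightarrow> a \<in> P \<Longrightarrow> inv a \<in> P"
  by (rule subgroup.m_inv_closed[OF hsub_subgroup])
lemma hsub_one: "hsub P \<Longrightarrow> \<one> \<in> P"
  by (rule subgroup.one_closed[OF hsub_subgroup])
lemma hsub_M: "hsub P \<Longrightarrow> a \<in> P \<Longrightarrow> a \<in> M"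
  using hsub_sub by blast
lemma hsub_gen_le: "hsub P \<Longrightarrow> S \<subseteq> P \<Longrightarrow> generate L S \<subseteq> P"
  by (rule generate_subgroup_incl[OF _ hsub_subgroup])

lemma orb_M: "b \<in> M \<Longrightarrow> orb b \<subseteq> M"
  unfolding orb_def using cj_M H_car by auto
lemma orb_self: "b \<in> M \<Longrightarrow> b \<in> orb b"
  unfolding orb_def using H_one M_car by (auto intro!: exI[of _ \<one>])
lemma orb_inv: "b \<in> M \<Longrightarrow> \<forall>h\<in>H. \<forall>x\<in>orb b. cj L h x \<in> orb b"
proof (intro ballI)
  fix h x assume b: "b \<in> M" and h: "h \<in> H" and x: "x \<in> orb b"
  then obtain g where g: "g \<in> H" "x = cj L g b" unfolding orb_def by auto
  then have "cj L h x = cj L (g \<otimes> h) b" using h H_car b M_car cj_cj by auto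
  then show "cj L h x \<in> orb b" unfolding orb_def using g h H_mult by auto
qed

lemma hsub_Sub: "b \<in> M \<Longrightarrow> hsub (generate L (orb b))"
  by (rule hsub_gen[OF orb_M orb_inv])
lemma hsub_Qx: "hsub Q \<Longrightarrow> b \<in> M \<Longrightarrow> hsub (generate L (Q \<union> orb b))"
proof (rule hsub_gen)
  assume Q: "hsub Q" and b: "b \<in> M"
  show "Q \<union> orb b \<subseteq> M" using orb_M[OF b] hsub_sub[OF Q] by auto
  show "\<forall>h\<in>H. \<forall>x\<in>Q \<union> orb b. cj L h x \<in> Q \<union> orb b"
    using orb_inv[OF b] hsub_cj[OF Q] by blast
qed

lemma hsub_gcomm: "hsub P \<Longrightarrow> m \<in> P \<Longrightarrow> h \<in> H \<Longrightarrow> gcomm L m h \<in> P"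
  using hsub_M M_car H_car by (simp add: gcomm_alt hsub_mult hsub_inv hsub_cj)

lemma hsub_cl: "hsub P \<Longrightarrow> m \<in> P \<Longrightarrow> set ys \<subseteq> H \<Longrightarrow> cl L m ys \<in> P"
  by (induction ys arbitrary: m) (auto simp: hsub_gcomm)

lemma Ker_subgroup: assumes P: "hsub P" and Q: "hsub Q" shows "subgroup (Ker P Q) L"
proof (rule subgroupI)
  show "Ker P Q \<subseteq> carrier L" unfolding Ker_def using H_car by auto
  show "Ker P Q \<noteq> {}" unfolding Ker_def using H_one P Q hsub_M M_car hsub_one
    by (auto intro!: exI[of _ \<one>])
  fix a b assume a: "a \<in> Ker P Q" and b: "b \<in> Ker P Q"
  show "inv a \<in> Ker P Q"
    unfolding Ker_def
  proof (intro CollectI conjI ballI)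
    show "inv a \<in> H" using a H_inv Ker_def by auto
    fix m assume m: "m \<in> P"
    have "cj L (inv a) m \<in> P" using hsub_cj[OF P] a m H_inv Ker_def by auto
    then have "gcomm L (cj L (inv a) m) a \<in> Q" using a Ker_def by auto
    then show "gcomm L m (inv a) \<in> Q"
      using gcomm_inv_right m a P hsub_M M_car H_car Ker_def hsub_inv[OF Q] by auto
  qed
  show "a \<otimes> b \<in> Ker P Q"
    unfolding Ker_def
  proof (intro CollectI conjI ballI)
    show "a \<otimes> b \<in> H" using a b H_mult Ker_def by auto
    fix m assume m: "m \<in> P"
    have "gcomm L m (a \<otimes> b) = gcomm L m b \<otimes> cj L b (gcomm L m a)"
      using gcomm_mult_right m a b P hsub_M M_car H_car Ker_def by auto
    then show "gcomm L m (a \<otimes> b) \<in> Q"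
      using a b m Ker_def hsub_mult[OF Q] hsub_cj[OF Q] by auto
  qed
qed

lemma Ker_normal: assumes P: "hsub P" and Q: "hsub Q" and g: "g \<in> Ker P Q" and h: "h \<in> H"
  shows "cj L h g \<in> Ker P Q"
  unfolding Ker_def
proof (intro CollectI conjI ballI)
  have gH: "g \<in> H" using g Ker_def by auto
  then show "cj L h g \<in> H" using h unfolding cj_def by (simp add: H_mult H_inv)
  fix m assume m: "m \<in> P"
  have mc: "m \<in> carrier L" using m P hsub_M M_car by auto
  have m': "cj L (inv h) m \<in> P" using hsub_cj[OF P] h H_inv m by auto
  have "gcomm L m (cj L h g) = cj L h (gcomm L (cj L (inv h) m) g)"
    using cj_gcomm[of h "cj L (inv h) m" g] h H_car gH mc by simp
  then show "gcomm L m (cj L h g) \<in> Q"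
    using m' g h hsub_cj[OF Q] Ker_def by auto
qed

lemma Ker_mono: "P' \<subseteq> P \<Longrightarrow> Q \<subseteq> Q' \<Longrightarrow> Ker P Q \<subseteq> Ker P' Q'"
  unfolding Ker_def by auto

lemma cl_equiv:
  assumes Q: "hsub Q" and b: "b \<in> M" and all: "\<forall>ys\<in>Hl K. cl L b ys \<in> Q"
    and h: "h \<in> H" and ys: "ys \<in> Hl K"
  shows "cl L (cj L h b) ys \<in> Q"
proof -
  let ?ys' = "map (cj L (inv h)) ys"
  have ysc: "set ys \<subseteq> carrier L" using Hl_car ys by auto
  have ys'H: "?ys' \<in> Hl K" using ys h unfolding Hl_def cj_def
    by (auto simp: H_mult H_inv)
  have "map (cj L h) ?ys' = ys" using ysc h H_car by (induction ys) auto
  then have "cj L h (cl L b ?ys') = cl L (cj L h b) ys"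
    using cl_cj[of h b ?ys'] h H_car b M_car Hl_car[OF ys'H] by simp
  then show ?thesis using all ys'H hsub_cj[OF Q h] by metis
qed

lemma propagate:
  assumes Q: "hsub Q" and Q': "hsub Q'" and QQ: "Q \<subseteq> Q'" and b: "b \<in> M"
    and all: "\<forall>ys\<in>Hl K. cl L b ys \<in> Q'"
    and m: "m \<in> generate L (Q \<union> orb b)" and ys: "ys \<in> Hl K"
  shows "cl L m ys \<in> Q'"
proof -
  have sg: "subgroup {m \<in> M. \<forall>ys\<in>Hl K. cl L m ys \<in> Q'} L"
    by (rule pre_subgroup_all[OF hsub_subgroup[OF Q'] Hl_car])
  have "Q \<union> orb b \<subseteq> {m \<in> M. \<forall>ys\<in>Hl K. cl L m ys \<in> Q'}"
  proof
    fix x assume "x \<in> Q \<union> orb b"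
    then show "x \<in> {m \<in> M. \<forall>ys\<in>Hl K. cl L m ys \<in> Q'}"
    proof
      assume x: "x \<in> Q"
      then show ?thesis using hsub_cl[OF Q x] QQ hsub_M[OF Q x] unfolding Hl_def by auto
    next
      assume "x \<in> orb b"
      then obtain h where h: "h \<in> H" "x = cj L h b" unfolding orb_def by auto
      then show ?thesis using cl_equiv[OF Q' b all] cj_M H_car b by auto
    qed
  qed
  then have "generate L (Q \<union> orb b) \<subseteq> {m \<in> M. \<forall>ys\<in>Hl K. cl L m ys \<in> Q'}"
    using generate_subgroup_incl[OF _ sg] by blast
  then show ?thesis using m ys by auto
qed

lemma claim_base: assumes "H \<subseteq> G" shows "Claim G"
  unfolding Claim_def
proof (intro allI impI)
  fix Q a assume Q: "hsub Q" and a: "a \<in> M" and "eng Q a"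
    and GK: "G \<subseteq> Ker (generate L (orb a)) Q"
  have aS: "a \<in> generate L (orb a)" using orb_self[OF a] generate.incl by metis
  show "\<exists>K. \<forall>ys\<in>Hl K. cl L a ys \<in> Q"
  proof (intro exI[of _ 1] ballI)
    fix ys assume "ys \<in> Hl 1"
    then obtain y where "ys = [y]" "y \<in> H" unfolding Hl_def by (auto simp: length_Suc_conv)
    then show "cl L a ys \<in> Q" using GK assms aS unfolding Ker_def by auto
  qed
qed

end




context core begin

definition eqQ where "eqQ Q x x' \<longleftrightarrow> x \<in> M \<and> x' \<in> M \<and> inv x \<otimes> x' \<in> Q"

lemma eqQ_refl: "hsub Q \<Longrightarrow> x \<in> M \<Longrightarrow> eqQ Q x x"
  unfolding eqQ_def using M_car hsub_one by auto

lemma eqQ_sym: assumes Q: "hsub Q" and e: "eqQ Q x x'" shows "eqQ Q x' x"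
proof -
  have c: "x \<in> carrier L" "x' \<in> carrier L" using e M_car unfolding eqQ_def by auto
  have "inv x' \<otimes> x = inv (inv x \<otimes> x')" using c by (simp add: inv_mult_group)
  then show ?thesis using e hsub_inv[OF Q] unfolding eqQ_def by auto
qed

lemma eqQ_trans: assumes Q: "hsub Q" and e1: "eqQ Q x x'" and e2: "eqQ Q x' x''" shows "eqQ Q x x''"
proof -
  have c: "x \<in> carrier L" "x' \<in> carrier L" "x'' \<in> carrier L" using e1 e2 M_car unfolding eqQ_def by auto
  have "inv x \<otimes> x'' = (inv x \<otimes> x') \<otimes> (inv x' \<otimes> x'')" using c by (simp add: m_assoc)
  then show ?thesis using e1 e2 hsub_mult[OF Q] unfolding eqQ_def by auto
qed

lemma eqQ_mem: assumes Q: "hsub Q" and e: "eqQ Q x x'" and x: "x \<in> Q" shows "x' \<in> Q"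
proof -
  have c: "x \<in> carrier L" "x' \<in> carrier L" using e M_car unfolding eqQ_def by auto
  have "x' = x \<otimes> (inv x \<otimes> x')" using c by simp
  then show ?thesis using e x hsub_mult[OF Q] unfolding eqQ_def by metis
qed

lemma eqQ_gcomm: assumes Q: "hsub Q" and e: "eqQ Q x x'" and y: "y \<in> H"
  shows "eqQ Q (gcomm L x y) (gcomm L x' y)"
proof -
  have m: "x \<in> M" "x' \<in> M" using e unfolding eqQ_def by auto
  have yc: "y \<in> carrier L" using y H_car by auto
  have "inv (gcomm L x y) \<otimes> gcomm L x' y = gcomm L (inv x \<otimes> x') y"
    using m yc by (simp add: gcomm_hom gcomm_inv_M M_inv)
  then show ?thesis using e hsub_gcomm[OF Q _ y] m yc gcomm_M unfolding eqQ_def by auto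
qed

lemma eqQ_cl: "hsub Q \<Longrightarrow> eqQ Q x x' \<Longrightarrow> set ys \<subseteq> H \<Longrightarrow> eqQ Q (cl L x ys) (cl L x' ys)"
  by (induction ys arbitrary: x x') (auto simp: eqQ_gcomm)

lemma eqQ_multq: assumes Q: "hsub Q" and x: "x \<in> M" and q: "q \<in> Q" shows "eqQ Q x (x \<otimes> q)"
  unfolding eqQ_def using x q M_car hsub_M[OF Q q] M_mult by auto

lemma Hl_split: "ys \<in> Hl (K + K') \<Longrightarrow> take K ys \<in> Hl K \<and> drop K ys \<in> Hl K'"
  unfolding Hl_def by (auto dest: in_set_takeD in_set_dropD)

lemma claim_step:
  assumes zH: "z \<in> H" and S'H: "S' \<subseteq> H" and zc: "\<forall>y\<in>Y. gcomm L z y \<in> generate L S'"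
    and IH: "Claim (generate L (insert z S'))"
  shows "Claim (generate L S')"
  unfolding Claim_def
proof (intro allI impI)
  fix Q a assume Q: "hsub Q" and aM: "a \<in> M" and en: "eng Q a"
    and GK: "generate L S' \<subseteq> Ker (generate L (orb a)) Q"
  define SA where "SA = generate L (orb a)"
  have hSA: "hsub SA" using hsub_Sub[OF aM] SA_def by simp
  have aSA: "a \<in> SA" unfolding SA_def using orb_self[OF aM] generate.incl by metis
  define K0 where "K0 = Ker SA Q"
  have sgK0: "subgroup K0 L" using Ker_subgroup[OF hSA Q] K0_def by simp
  have K0H: "K0 \<subseteq> H" unfolding K0_def Ker_def by auto
  have zc': "\<forall>y\<in>Y. gcomm L z y \<in> K0" using zc GK SA_def K0_def by auto
  have zcar: "z \<in> carrier L" using zH H_car by auto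
  have zcH: "gcomm L z h \<in> K0" if h: "h \<in> H" for h
  proof -
    have "h \<in> generate L Y" using h Hdef by simp
    then show ?thesis
    proof induction
      case one show ?case using zcar subgroup.one_closed[OF sgK0] by simp
    next
      case (incl y) then show ?case using zc' by auto
    next
      case (inv y)
      have yc: "y \<in> carrier L" using inv Ysub by auto
      have yH: "y \<in> H" using inv Hdef generate.incl by metis
      have "cj L (inv y) (gcomm L z y) \<in> K0"
        using Ker_normal[OF hSA Q] zc' inv yH H_inv K0_def by auto
      then show ?case using gcomm_inv_right2[OF zcar yc] subgroup.m_inv_closed[OF sgK0] by simp
    next
      case (eng g h)
      have gh: "g \<in> H" "h \<in> H" using eng Hdef by auto
      have "gcomm L z (g \<otimes> h) = gcomm L z h \<otimes> cj L h (gcomm L z g)"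
        using gcomm_mult_right zcar gh H_car by auto
      moreover have "cj L h (gcomm L z g) \<in> K0"
        using Ker_normal[OF hSA Q] eng gh K0_def by auto
      ultimately show ?case using eng subgroup.m_closed[OF sgK0] by simp
    qed
  qed
  have CM: "eqQ Q (gcomm L (gcomm L m z) y) (gcomm L (gcomm L m y) z)"
    if m: "m \<in> SA" and y: "y \<in> H" for m y
  proof -
    have mM: "m \<in> M" using m hsub_M[OF hSA] by auto
    have yc: "y \<in> carrier L" using y H_car by auto
    have u: "cj L (y \<otimes> z) m \<in> SA" using hsub_cj[OF hSA _ m] H_mult[OF y zH] by auto
    have q: "gcomm L (cj L (y \<otimes> z) m) (gcomm L z y) \<in> Q"
      using u zcH[OF y] unfolding K0_def Ker_def by auto
    have X: "gcomm L (gcomm L m y) z \<in> M" using mM yc zcar by (simp add: gcomm_M)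
    show ?thesis
      using comm_ident[OF mM yc zcar] eqQ_sym[OF Q eqQ_multq[OF Q X q]] by simp
  qed
  have CMn: "eqQ Q (cl L (gcomm L m z) (replicate n y)) (gcomm L (cl L m (replicate n y)) z)"
    if m: "m \<in> SA" and y: "y \<in> H" for m y n
    using m
  proof (induction n arbitrary: m)
    case 0
    then show ?case using eqQ_refl[OF Q] hsub_M[OF hSA] zcar gcomm_M by simp
  next
    case (Suc n)
    have m1: "gcomm L m y \<in> SA" using hsub_gcomm[OF hSA Suc.prems y] .
    have "eqQ Q (cl L (gcomm L (gcomm L m z) y) (replicate n y)) (cl L (gcomm L (gcomm L m y) z) (replicate n y))"
      by (rule eqQ_cl[OF Q CM[OF Suc.prems y]]) (use y in auto)
    moreover have "eqQ Q (cl L (gcomm L (gcomm L m y) z) (replicate n y)) (gcomm L (cl L (gcomm L m y) (replicate n y)) z)"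
      using Suc.IH[OF m1] .
    ultimately have "eqQ Q (cl L (gcomm L (gcomm L m z) y) (replicate n y)) (gcomm L (cl L (gcomm L m y) (replicate n y)) z)"
      by (rule eqQ_trans[OF Q])
    then show ?case by simp
  qed
  have CMj: "eqQ Q (cl L m (replicate j z @ replicate n y)) (cl L m (replicate n y @ replicate j z))"
    if m: "m \<in> SA" and y: "y \<in> H" for m y n j
    using m
  proof (induction j arbitrary: m)
    case 0
    have "set (replicate n y) \<subseteq> carrier L" using y H_car by auto
    then show ?case using eqQ_refl[OF Q] hsub_M[OF hSA 0] cl_M by simp
  next
    case (Suc j)
    have m1: "gcomm L m z \<in> SA" using hsub_gcomm[OF hSA Suc.prems zH] .
    have A: "cl L m (replicate (Suc j) z @ replicate n y) = cl L (gcomm L m z) (replicate j z @ replicate n y)"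
      by simp
    have B: "cl L (gcomm L m z) (replicate n y @ replicate j z) = cl L (cl L (gcomm L m z) (replicate n y)) (replicate j z)"
      by (simp add: cl_append)
    have C: "cl L m (replicate n y @ replicate (Suc j) z) = cl L (gcomm L (cl L m (replicate n y)) z) (replicate j z)"
      by (simp add: cl_append)
    have "eqQ Q (cl L (cl L (gcomm L m z) (replicate n y)) (replicate j z)) (cl L (gcomm L (cl L m (replicate n y)) z) (replicate j z))"
      by (rule eqQ_cl[OF Q CMn[OF Suc.prems y]]) (use zH in auto)
    then show ?case using Suc.IH[OF m1] eqQ_trans[OF Q] A B C by metis
  qed
  define b where "b j = cl L a (replicate j z)" for j
  have bSA: "b j \<in> SA" for j unfolding b_def by (rule hsub_cl[OF hSA aSA]) (use zH in auto)
  have bM: "b j \<in> M" for j using bSA hsub_M[OF hSA] by auto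
  have bSuc: "b (Suc j) = gcomm L (b j) z" for j
  proof -
    have "replicate (Suc j) z = replicate j z @ [z]" by (simp add: replicate_append_same)
    then show ?thesis unfolding b_def by (simp add: cl_append)
  qed
  define Qj where "Qj j = generate L (Q \<union> orb (b j))" for j
  have hQj: "hsub (Qj j)" for j unfolding Qj_def using hsub_Qx[OF Q bM] .
  have QQj: "Q \<subseteq> Qj j" for j unfolding Qj_def by (auto intro: generate.incl)
  have bQj: "b j \<in> Qj j" for j unfolding Qj_def by (rule generate.incl) (use orb_self[OF bM] in auto)
  obtain n0 where n0: "cl L a (replicate n0 z) \<in> Q" using en zH unfolding eng_def by auto
  have Qn0: "Qj n0 \<subseteq> Q"
    unfolding Qj_def
  proof (rule hsub_gen_le[OF Q])
    have "b n0 \<in> Q" using n0 b_def by simp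
    then show "Q \<union> orb (b n0) \<subseteq> Q" unfolding orb_def using hsub_cj[OF Q] by auto
  qed
  have stepj: "\<exists>Kj. \<forall>ys\<in>Hl Kj. cl L (b j) ys \<in> Qj (Suc j)" for j
  proof -
    have engj: "eng (Qj (Suc j)) (b j)"
      unfolding eng_def
    proof
      fix y assume y: "y \<in> H"
      obtain n where n: "cl L a (replicate n y) \<in> Q" using en y unfolding eng_def by auto
      have "cl L (cl L a (replicate n y)) (replicate j z) \<in> Q"
        by (rule hsub_cl[OF Q n]) (use zH in auto)
      then have "cl L a (replicate n y @ replicate j z) \<in> Q" by (simp add: cl_append)
      then have "cl L a (replicate j z @ replicate n y) \<in> Q"
        using eqQ_mem[OF Q eqQ_sym[OF Q CMj[OF aSA y]]] by blast
      then have "cl L (b j) (replicate n y) \<in> Q" unfolding b_def by (simp add: cl_append)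
      then show "\<exists>n. cl L (b j) (replicate n y) \<in> Qj (Suc j)" using QQj by blast
    qed
    have SubSA: "generate L (orb (b j)) \<subseteq> SA"
      by (rule hsub_gen_le[OF hSA]) (use hsub_cj[OF hSA] bSA in \<open>auto simp: orb_def\<close>)
    have sgKj: "subgroup (Ker (generate L (orb (b j))) (Qj (Suc j))) L"
      using Ker_subgroup[OF hsub_Sub[OF bM] hQj] .
    have S'K: "S' \<subseteq> Ker (generate L (orb (b j))) (Qj (Suc j))"
    proof -
      have "S' \<subseteq> generate L S'" by (auto intro: generate.incl)
      also have "\<dots> \<subseteq> Ker SA Q" using GK SA_def by simp
      also have "\<dots> \<subseteq> Ker (generate L (orb (b j))) (Qj (Suc j))"
        using Ker_mono[OF SubSA QQj] .
      finally show ?thesis .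
    qed
    have zK: "z \<in> Ker (generate L (orb (b j))) (Qj (Suc j))"
    proof -
      have sg: "subgroup {m \<in> M. gcomm L m z \<in> Qj (Suc j)} L"
        using pre_subgroup[OF hsub_subgroup[OF hQj], of "[z]"] zcar by simp
      have "orb (b j) \<subseteq> {m \<in> M. gcomm L m z \<in> Qj (Suc j)}"
      proof
        fix x assume "x \<in> orb (b j)"
        then obtain h where h: "h \<in> H" "x = cj L h (b j)" unfolding orb_def by auto
        have hc: "h \<in> carrier L" using h H_car by auto
        define k where "k = gcomm L z (inv h)"
        have kK: "k \<in> K0" using zcH H_inv h k_def by auto
        have kH: "k \<in> H" using kK K0H by auto
        have kc: "k \<in> carrier L" using kH H_car by auto
        have bc: "b j \<in> carrier L" using bM M_car by auto
        have z': "cj L (inv h) z = z \<otimes> k" using conj_conj_elim[OF zcar hc] k_def by simp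
        have "gcomm L x z = gcomm L (cj L h (b j)) (cj L h (cj L (inv h) z))"
          using h hc zcar by simp
        also have "\<dots> = cj L h (gcomm L (b j) (z \<otimes> k))"
          using cj_gcomm[of h "b j" "cj L (inv h) z"] hc bc zcar kc z' by simp
        also have "gcomm L (b j) (z \<otimes> k) = gcomm L (b j) k \<otimes> cj L k (gcomm L (b j) z)"
          using gcomm_mult_right bc zcar kc by simp
        finally have eq: "gcomm L x z = cj L h (gcomm L (b j) k \<otimes> cj L k (b (Suc j)))"
          using bSuc by simp
        have "gcomm L (b j) k \<in> Q" using kK bSA unfolding K0_def Ker_def by auto
        moreover have "cj L k (b (Suc j)) \<in> Qj (Suc j)" using hsub_cj[OF hQj kH bQj] .
        ultimately have "gcomm L (b j) k \<otimes> cj L k (b (Suc j)) \<in> Qj (Suc j)"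
          using QQj hsub_mult[OF hQj] by blast
        then have "gcomm L x z \<in> Qj (Suc j)" using eq hsub_cj[OF hQj h(1)] by simp
        moreover have "x \<in> M" using h cj_M hc bM by simp
        ultimately show "x \<in> {m \<in> M. gcomm L m z \<in> Qj (Suc j)}" by simp
      qed
      then have "generate L (orb (b j)) \<subseteq> {m \<in> M. gcomm L m z \<in> Qj (Suc j)}"
        by (rule generate_subgroup_incl[OF _ sg])
      then show ?thesis unfolding Ker_def using zH by auto
    qed
    have GKj: "generate L (insert z S') \<subseteq> Ker (generate L (orb (b j))) (Qj (Suc j))"
      by (rule generate_subgroup_incl[OF _ sgKj]) (use S'K zK in auto)
    show ?thesis using IH[unfolded Claim_def, rule_format, OF hQj bM engj GKj] .
  qed
  have chain: "\<exists>K. \<forall>ys\<in>Hl K. cl L a ys \<in> Qj j" for j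
  proof (induction j)
    case 0
    have "a \<in> Qj 0" using bQj[of 0] unfolding b_def by simp
    then show ?case by (intro exI[of _ 0]) (auto simp: Hl_def)
  next
    case (Suc j)
    obtain K where K: "\<forall>ys\<in>Hl K. cl L a ys \<in> Qj j" using Suc by blast
    obtain Kj where Kj: "\<forall>ys\<in>Hl Kj. cl L (b j) ys \<in> Qj (Suc j)" using stepj by blast
    show ?case
    proof (intro exI[of _ "K + Kj"] ballI)
      fix ys assume ys: "ys \<in> Hl (K + Kj)"
      have "cl L (cl L a (take K ys)) (drop K ys) \<in> Qj (Suc j)"
        using propagate[OF Q hQj QQj bM Kj, of "cl L a (take K ys)" "drop K ys"]
          K Hl_split[OF ys] unfolding Qj_def by auto
      then show "cl L a ys \<in> Qj (Suc j)"
        using cl_append[of L a "take K ys" "drop K ys"] by simp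
    qed
  qed
  show "\<exists>K. \<forall>ys\<in>Hl K. cl L a ys \<in> Q" using chain[of n0] Qn0 by blast
qed


fun good where
  "good W [] = True"
| "good W (z # zs) = ((\<forall>y\<in>Y. gcomm L z y \<in> generate L (set zs \<union> W)) \<and> good W zs)"

lemma good_claim:
  "good W (pre @ zs) \<Longrightarrow> set (pre @ zs) \<subseteq> H \<Longrightarrow> W \<subseteq> H \<Longrightarrow>
   Claim (generate L (set (pre @ zs) \<union> W)) \<Longrightarrow> Claim (generate L (set zs \<union> W))"
proof (induction pre)
  case Nil then show ?case by simp
next
  case (Cons p pre)
  have "Claim (generate L (set (pre @ zs) \<union> W))"
  proof (rule claim_step)
    show "p \<in> H" using Cons.prems by auto
    show "set (pre @ zs) \<union> W \<subseteq> H" using Cons.prems by auto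
    show "\<forall>y\<in>Y. gcomm L p y \<in> generate L (set (pre @ zs) \<union> W)" using Cons.prems(1) by simp
    have "insert p (set (pre @ zs) \<union> W) = set ((p # pre) @ zs) \<union> W" by simp
    then show "Claim (generate L (insert p (set (pre @ zs) \<union> W)))" using Cons.prems(4) by simp
  qed
  then show ?case using Cons by simp
qed

lemma core_main:
  assumes g: "good (H \<inter> M) zs" and zsH: "set zs \<subseteq> H" and Yz: "Y \<subseteq> set zs \<union> M"
    and t: "t \<in> M" and en: "\<forall>y\<in>H. \<exists>n. cl L t (replicate n y) = \<one>"
  shows "\<exists>K. \<forall>ys\<in>Hl K. cl L t ys = \<one>"
proof -
  define W where "W = H \<inter> M"
  have YH: "Y \<subseteq> H" unfolding Hdef by (auto intro: generate.incl)
  have "H \<subseteq> generate L (set zs \<union> W)"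
    unfolding Hdef by (rule mono_generate) (use Yz YH W_def in auto)
  then have C0: "Claim (generate L (set (zs @ []) \<union> W))" using claim_base by simp
  have C1: "Claim (generate L (set [] \<union> W))"
    by (rule good_claim[OF _ _ _ C0]) (use g zsH W_def in auto)
  have h1: "hsub {\<one>}" unfolding hsub_def using M_one triv_subgroup H_car by auto
  have e1: "eng {\<one>} t" unfolding eng_def using en by auto
  have sgK: "subgroup (Ker (generate L (orb t)) {\<one>}) L" using Ker_subgroup[OF hsub_Sub[OF t] h1] .
  have "W \<subseteq> Ker (generate L (orb t)) {\<one>}"
  proof
    fix w assume w: "w \<in> W"
    have "gcomm L m w = \<one>" if "m \<in> generate L (orb t)" for m
      using gcomm_MM hsub_M[OF hsub_Sub[OF t] that] w W_def by auto
    then show "w \<in> Ker (generate L (orb t)) {\<one>}" unfolding Ker_def using w W_def by auto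
  qed
  then have "generate L W \<subseteq> Ker (generate L (orb t)) {\<one>}"
    by (rule generate_subgroup_incl[OF _ sgK])
  then show ?thesis using C1[unfolded Claim_def, rule_format, OF h1 t e1] by simp
qed

lemma good_append:
  "good W zs \<Longrightarrow> (\<forall>z\<in>set pre. \<forall>y\<in>Y. gcomm L z y \<in> generate L (set zs \<union> W)) \<Longrightarrow> good W (pre @ zs)"
proof (induction pre)
  case Nil then show ?case by simp
next
  case (Cons p pre)
  have "generate L (set zs \<union> W) \<subseteq> generate L (set (pre @ zs) \<union> W)"
    by (rule mono_generate) auto
  then show ?case using Cons by auto
qed

lemma H_gcomm: "a \<in> H \<Longrightarrow> b \<in> H \<Longrightarrow> gcomm L a b \<in> H"
  unfolding gcomm_def by (simp add: H_mult H_inv)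

end

locale core2 = core +
  fixes c :: nat
  assumes Yfin: "finite Y" and lcM: "lower_central L c \<subseteq> M"
begin

definition ys0 where "ys0 = (SOME xs. set xs = Y)"
lemma ys0: "set ys0 = Y" unfolding ys0_def using finite_list[OF Yfin] by (metis (mono_tags) someI_ex)

fun lv where
  "lv 0 = ys0"
| "lv (Suc k) = concat (map (\<lambda>z. map (\<lambda>y. gcomm L z y) ys0) (lv k))"

lemma YH: "Y \<subseteq> H" unfolding Hdef by (auto intro: generate.incl)

lemma lv_H: "set (lv k) \<subseteq> H"
proof (induction k)
  case 0 then show ?case using ys0 YH by simp
next
  case (Suc k) then show ?case using ys0 YH by (auto intro!: H_gcomm)
qed

lemma lv_lc: "set (lv k) \<subseteq> lower_central L k"
proof (induction k)
  case 0 then show ?case using ys0 Ysub by simp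
next
  case (Suc k)
  show ?case
  proof
    fix x assume "x \<in> set (lv (Suc k))"
    then obtain z y where "z \<in> set (lv k)" "y \<in> Y" "x = gcomm L z y" using ys0 by auto
    then show "x \<in> lower_central L (Suc k)" using Suc Ysub
      by (auto intro!: generate.incl)
  qed
qed

definition tl' where "tl' k = concat (map lv [k..<c])"

lemma tl_H: "set (tl' k) \<subseteq> H" unfolding tl'_def using lv_H by auto

lemma tl_good: "good (H \<inter> M) (tl' k)"
proof (induction "c - k" arbitrary: k)
  case 0 then show ?case unfolding tl'_def by simp
next
  case (Suc d)
  then have kc: "k < c" by simp
  have eq: "tl' k = lv k @ tl' (Suc k)" unfolding tl'_def using kc by (simp add: upt_conv_Cons)
  have IH: "good (H \<inter> M) (tl' (Suc k))" using Suc by simp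
  show ?case unfolding eq
  proof (rule good_append[OF IH], intro ballI)
    fix z y assume z: "z \<in> set (lv k)" and y: "y \<in> Y"
    have x: "gcomm L z y \<in> set (lv (Suc k))" using z y ys0 by auto
    show "gcomm L z y \<in> generate L (set (tl' (Suc k)) \<union> H \<inter> M)"
    proof (cases "Suc k < c")
      case True
      then have "set (lv (Suc k)) \<subseteq> set (tl' (Suc k))" unfolding tl'_def
        by (auto simp: upt_conv_Cons)
      then show ?thesis using x by (auto intro: generate.incl)
    next
      case False
      then have "Suc k = c" using kc by simp
      then have "gcomm L z y \<in> M" using lv_lc[of "Suc k"] x lcM by auto
      moreover have "gcomm L z y \<in> H" using x lv_H[of "Suc k"] by blast
      ultimately show ?thesis by (auto intro: generate.incl)
    qed
  qed
qed

lemma Y_tl: "Y \<subseteq> set (tl' 0) \<union> M"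
proof (cases "0 < c")
  case True
  then have "set (lv 0) \<subseteq> set (tl' 0)" unfolding tl'_def by (auto simp: upt_conv_Cons)
  then show ?thesis using ys0 by auto
next
  case False
  then have "carrier L \<subseteq> M" using lcM by simp
  then show ?thesis using Ysub by blast
qed

theorem core_final:
  assumes t: "t \<in> M" and en: "\<forall>y\<in>H. \<exists>n. cl L t (replicate n y) = \<one>"
  shows "\<exists>K. \<forall>ys\<in>Hl K. cl L t ys = \<one>"
  using core_main[OF tl_good tl_H Y_tl t en] .

end




context group begin
lemma lc_car: "lower_central G n \<subseteq> carrier G"
proof (induction n)
  case 0 then show ?case by simp
next
  case (Suc n)
  have "{gcomm G a b | a b. a \<in> lower_central G n \<and> b \<in> carrier G} \<subseteq> carrier G"
    using Suc by auto
  then show ?case by (simp add: generate_incl)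
qed

lemma lc_one: "\<one> \<in> lower_central G n"
  by (cases n) (auto intro: generate.one)
end

context abn begin

lemma lc_quot: "x \<in> lower_central L i \<Longrightarrow> M #> x \<in> lower_central (L Mod M) i"
proof (induction i arbitrary: x)
  case 0
  then show ?case using normal.r_coset_hom_Mod[OF Mnormal] by (auto simp: hom_def)
next
  case (Suc i)
  interpret Q: group "L Mod M" using normal.factorgroup_is_group[OF Mnormal] .
  interpret phi: group_hom L "L Mod M" "\<lambda>a. M #> a"
    using normal.r_coset_hom_Mod[OF Mnormal] by (unfold_locales) auto
  have phig: "M #> gcomm L a b = gcomm (L Mod M) (M #> a) (M #> b)"
    if "a \<in> carrier L" "b \<in> carrier L" for a b
    using that by (simp add: gcomm_def)
  have lcc: "lower_central L i \<subseteq> carrier L" by (rule lc_car)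
  have xg: "x \<in> generate L {gcomm L a b | a b. a \<in> lower_central L i \<and> b \<in> carrier L}"
    using Suc.prems by simp
  show ?case using xg
  proof (induction rule: generate.induct)
    case one
    then show ?case by (simp add: generate.one[of "L Mod M", simplified])
  next
    case (incl h)
    then obtain a b where ab: "h = gcomm L a b" "a \<in> lower_central L i" "b \<in> carrier L" by auto
    then have "M #> h = gcomm (L Mod M) (M #> a) (M #> b)" using phig lcc by auto
    moreover have "M #> a \<in> lower_central (L Mod M) i" using Suc.IH ab by auto
    moreover have "M #> b \<in> carrier (L Mod M)" using ab by simp
    ultimately show ?case by (auto intro!: generate.incl)
  next
    case (inv h)
    then obtain a b where ab: "h = gcomm L a b" "a \<in> lower_central L i" "b \<in> carrier L" by auto
    then have hc: "h \<in> carrier L" using lcc by auto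
    have "M #> h = gcomm (L Mod M) (M #> a) (M #> b)" using phig lcc ab by auto
    moreover have "M #> a \<in> lower_central (L Mod M) i" using Suc.IH ab by auto
    moreover have "M #> b \<in> carrier (L Mod M)" using ab by simp
    ultimately have "inv\<^bsub>L Mod M\<^esub> (M #> h) \<in> lower_central (L Mod M) (Suc i)"
      by (auto intro!: generate.inv)
    then show ?case using phi.hom_inv[OF hc] by simp
  next
    case (eng h1 h2)
    have gc: "generate L {gcomm L a b |a b. a \<in> lower_central L i \<and> b \<in> carrier L} \<subseteq> carrier L"
      using lc_car[of "Suc i"] by simp
    have hc: "h1 \<in> carrier L" "h2 \<in> carrier L" using eng gc by auto
    have "M #> (h1 \<otimes> h2) = (M #> h1) \<otimes>\<^bsub>L Mod M\<^esub> (M #> h2)"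
      by (rule phi.hom_mult[OF hc])
    moreover have "(M #> h1) \<otimes>\<^bsub>L Mod M\<^esub> (M #> h2) \<in> lower_central (L Mod M) (Suc i)"
      unfolding lower_central.simps
      by (rule generate.eng) (use eng.IH in \<open>simp_all only: lower_central.simps\<close>)
    ultimately show ?case by metis
  qed
qed

lemma nil_quot: assumes "nilpotent_group (L Mod M)" shows "\<exists>c. lower_central L c \<subseteq> M"
proof -
  obtain n where n: "lower_central (L Mod M) n = {M}"
    using assms unfolding nilpotent_group_def by auto
  have "lower_central L n \<subseteq> M"
  proof
    fix x assume x: "x \<in> lower_central L n"
    then have "M #> x = M" using lc_quot n by auto
    then show "x \<in> M" using coset_join1 M_subgroup lc_car x by blast
  qed
  then show ?thesis by blast
qed

lemma lc_final:
  assumes lcM: "lower_central L c \<subseteq> M"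
    and all: "\<forall>m\<in>M. \<forall>ys. set ys \<subseteq> carrier L \<longrightarrow> length ys = K \<longrightarrow> cl L m ys = \<one>"
  shows "lower_central L (c + K) = {\<one>}"
proof -
  define Ys where "Ys j = {ys. set ys \<subseteq> carrier L \<and> j \<le> length ys}" for j
  define V where "V j = {m \<in> M. \<forall>ys\<in>Ys j. cl L m ys \<in> {\<one>}}" for j
  have sgV: "subgroup (V j) L" for j
    unfolding V_def by (rule pre_subgroup_all[OF triv_subgroup]) (auto simp: Ys_def)
  have MV: "M \<subseteq> V K"
  proof
    fix m assume m: "m \<in> M"
    have "cl L m ys = \<one>" if ys: "ys \<in> Ys K" for ys
    proof -
      have "cl L m ys = cl L (cl L m (take K ys)) (drop K ys)"
        using cl_append[of L m "take K ys" "drop K ys"] by simp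
      also have "cl L m (take K ys) = \<one>"
      proof -
        have "set (take K ys) \<subseteq> carrier L" using ys set_take_subset unfolding Ys_def by fastforce
        moreover have "length (take K ys) = K" using ys unfolding Ys_def by auto
        ultimately show ?thesis using all m by blast
      qed
      moreover have "set (drop K ys) \<subseteq> carrier L" using ys set_drop_subset unfolding Ys_def by fastforce
      ultimately show ?thesis by simp
    qed
    then show "m \<in> V K" using m unfolding V_def by auto
  qed
  have step: "j \<le> K \<Longrightarrow> lower_central L (c + j) \<subseteq> V (K - j)" for j
  proof (induction j)
    case 0 then show ?case using lcM MV by simp
  next
    case (Suc j)
    have IH: "lower_central L (c + j) \<subseteq> V (K - j)" using Suc by simp
    have "{gcomm L a b | a b. a \<in> lower_central L (c + j) \<and> b \<in> carrier L} \<subseteq> V (K - Suc j)"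
    proof
      fix x assume "x \<in> {gcomm L a b | a b. a \<in> lower_central L (c + j) \<and> b \<in> carrier L}"
      then obtain a b where ab: "x = gcomm L a b" "a \<in> V (K - j)" "b \<in> carrier L" using IH by blast
      have aM: "a \<in> M" using ab V_def by auto
      have "cl L x ys = \<one>" if ys: "ys \<in> Ys (K - Suc j)" for ys
      proof -
        have "b # ys \<in> Ys (K - j)" using ys ab Suc.prems unfolding Ys_def by auto
        then show ?thesis using ab unfolding V_def by auto
      qed
      then show "x \<in> V (K - Suc j)" unfolding V_def using ab aM gcomm_M by auto
    qed
    then show ?case by (simp add: generate_subgroup_incl[OF _ sgV])
  qed
  have "lower_central L (c + K) \<subseteq> V 0" using step[of K] by simp
  also have "V 0 \<subseteq> {\<one>}"
  proof
    fix m assume "m \<in> V 0"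
    then have "\<forall>ys\<in>Ys 0. cl L m ys \<in> {\<one>}" unfolding V_def by auto
    moreover have "[] \<in> Ys 0" by (simp add: Ys_def)
    ultimately have "cl L m [] \<in> {\<one>}" by blast
    then show "m \<in> {\<one>}" by simp
  qed
  finally show ?thesis using lc_one by auto
qed

end



context group begin

lemma tg_top: "topological_group G T \<Longrightarrow> topspace T = carrier G"
  by (simp add: topological_group_def)

lemma cont_mult:
  assumes tg: "topological_group G T" and f: "continuous_map T T f" and g: "continuous_map T T g"
  shows "continuous_map T T (\<lambda>x. f x \<otimes> g x)"
proof -
  have m: "continuous_map (prod_topology T T) T (\<lambda>(x, y). x \<otimes> y)"
    using tg by (simp add: topological_group_def)
  have "continuous_map T T ((\<lambda>(x, y). x \<otimes> y) \<circ> (\<lambda>x. (f x, g x)))"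
    by (rule continuous_map_compose[OF continuous_map_pairedI[OF f g] m])
  then show ?thesis by (simp add: o_def)
qed

lemma cont_inv:
  assumes tg: "topological_group G T" and f: "continuous_map T T f"
  shows "continuous_map T T (\<lambda>x. inv (f x))"
proof -
  have m: "continuous_map T T (\<lambda>x. inv x)"
    using tg by (simp add: topological_group_def)
  have "continuous_map T T ((\<lambda>x. inv x) \<circ> f)"
    by (rule continuous_map_compose[OF f m])
  then show ?thesis by (simp add: o_def)
qed

lemma cont_const: "topological_group G T \<Longrightarrow> c \<in> carrier G \<Longrightarrow> continuous_map T T (\<lambda>x. c)"
  by (simp add: tg_top)

lemma cont_id: "continuous_map T T (\<lambda>x. x)"
  using continuous_map_id[of T] by (simp add: id_def)

lemma cont_gcomm1: "topological_group G T \<Longrightarrow> continuous_map T T f \<Longrightarrow> y \<in> carrier G \<Longrightarrow>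
  continuous_map T T (\<lambda>x. gcomm G (f x) y)"
  unfolding gcomm_def by (intro cont_mult cont_inv cont_const) auto

lemma cont_gcomm2: "topological_group G T \<Longrightarrow> m \<in> carrier G \<Longrightarrow>
  continuous_map T T (\<lambda>x. gcomm G m x)"
  unfolding gcomm_def by (intro cont_mult cont_inv cont_const cont_id) auto

lemma cont_cj: "topological_group G T \<Longrightarrow> t \<in> carrier G \<Longrightarrow>
  continuous_map T T (\<lambda>x. cj G x t)"
  unfolding cj_def by (intro cont_mult cont_inv cont_const cont_id) auto

lemma cont_cl: "topological_group G T \<Longrightarrow> continuous_map T T f \<Longrightarrow> set ys \<subseteq> carrier G \<Longrightarrow>
  continuous_map T T (\<lambda>x. cl G (f x) ys)"
proof (induction ys arbitrary: f)
  case Nil then show ?case by simp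
next
  case (Cons y ys)
  have "continuous_map T T (\<lambda>x. gcomm G (f x) y)" using cont_gcomm1 Cons.prems by auto
  then show ?case using Cons.IH[of "\<lambda>x. gcomm G (f x) y"] Cons.prems by simp
qed

lemma closed_one:
  assumes tg: "topological_group G T" and hs: "Hausdorff_space T" and f: "continuous_map T T f"
  shows "closedin T {x \<in> topspace T. f x \<in> {\<one>}}"
  by (rule closedin_continuous_map_preimage[OF f closedin_Hausdorff_singleton[OF hs]])
     (simp add: tg_top[OF tg])

lemma dense_ext:
  assumes tg: "topological_group G T" and hs: "Hausdorff_space T"
    and dense: "T closure_of H0 = carrier G" and H0: "H0 \<subseteq> carrier G" and m: "m \<in> carrier G"
    and all: "\<forall>hs. set hs \<subseteq> H0 \<and> length hs = K \<longrightarrow> cl G m hs = \<one>"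
  shows "\<forall>ls. set ls \<subseteq> carrier G \<and> length ls = K \<longrightarrow> cl G m ls = \<one>"
proof -
  have P: "\<forall>ls hs. set ls \<subseteq> carrier G \<longrightarrow> length ls = n \<longrightarrow> set hs \<subseteq> H0 \<longrightarrow> length hs + n = K
     \<longrightarrow> cl G m (ls @ hs) = \<one>" for n
  proof (induction n)
    case 0 then show ?case using all by auto
  next
    case (Suc n)
    show ?case
    proof (intro allI impI)
      fix ls hs assume ls: "set ls \<subseteq> carrier G" "length ls = Suc n" and hs0: "set hs \<subseteq> H0"
        and len: "length hs + Suc n = K"
      obtain ls' y where ly: "ls = ls' @ [y]" using ls(2) by (metis length_Suc_conv_rev)
      have ls': "set ls' \<subseteq> carrier G" "length ls' = n" "y \<in> carrier G" using ls ly by auto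
      define c where "c = cl G m ls'"
      have cc: "c \<in> carrier G" using c_def m ls' by simp
      have hsc: "set hs \<subseteq> carrier G" using hs0 H0 by auto
      define F where "F = {x \<in> topspace T. cl G (gcomm G c x) hs \<in> {\<one>}}"
      have cF: "closedin T F" unfolding F_def
        by (rule closed_one[OF tg hs cont_cl[OF tg cont_gcomm2[OF tg cc] hsc]])
      have "H0 \<subseteq> F"
      proof
        fix h assume h: "h \<in> H0"
        have "cl G m (ls' @ h # hs) = \<one>" using Suc.IH ls' h hs0 len by auto
        then show "h \<in> F" unfolding F_def c_def using h H0 tg_top[OF tg] by (auto simp: cl_append)
      qed
      then have "carrier G \<subseteq> F" using closure_of_minimal[OF _ cF] dense by metis
      then have "cl G (gcomm G c y) hs = \<one>" using ls' unfolding F_def by auto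
      then show "cl G m (ls @ hs) = \<one>" unfolding ly c_def by (simp add: cl_append)
    qed
  qed
  show ?thesis using P[of K] by (metis append_Nil2 empty_subsetI list.size(3) set_empty add_0)
qed

end


lemma (in group) main_aux:
  fixes \<T> :: "'a topology" and M S :: "'a set"
  assumes "pro_p_group p G \<T>"
    and "top_fin_gen G \<T>"
    and "M \<lhd> G"
    and "\<forall>a \<in> M. \<forall>b \<in> M. a \<otimes> b = b \<otimes> a"
    and "finite S" and "S \<subseteq> carrier G"
    and "\<forall>t \<in> S. right_engel G t"
    and "M = top_normal_closure G \<T> S"
    and "nilpotent_group (G Mod M)"
  shows "nilpotent_group G"
proof -
  have tg: "topological_group G \<T>" using assms(1) by (simp add: pro_p_group_def)
  have hsd: "Hausdorff_space \<T>" using assms(1) by (simp add: pro_p_group_def)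
  have grp: "group G" using tg by (simp add: topological_group_def)
    have top: "topspace \<T> = carrier G" using tg by (simp add: topological_group_def)
  have abnLM: "abn G M" by (intro abn.intro abn_axioms.intro grp assms(3) assms(4))
  interpret A: abn G M by (rule abnLM)
  obtain c where lcM: "lower_central G c \<subseteq> M" using A.nil_quot assms(9) by blast
  obtain Xg where Xg: "finite Xg" "Xg \<subseteq> carrier G" "\<T> closure_of generate G Xg = carrier G"
    using assms(2) unfolding top_fin_gen_def by auto
  define H where "H = generate G Xg"
  have c2: "core2 G M H Xg c"
    by (intro core2.intro core.intro core_axioms.intro core2_axioms.intro abnLM Xg(1,2) lcM H_def)
  interpret C: core2 G M H Xg c by (rule c2)
  have Hc: "H \<subseteq> carrier G" using H_def generate_incl Xg by simp
  have dense: "\<T> closure_of H = carrier G" using Xg H_def by simp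
  define gens where "gens = (\<Union>g\<in>carrier G. (\<lambda>s. inv g \<otimes> s \<otimes> g) ` S)"
  define G0 where "G0 = generate G gens"
  have Mdef: "M = \<T> closure_of G0" using assms(8) unfolding top_normal_closure_def G0_def gens_def by simp
  have gensc: "gens \<subseteq> carrier G" unfolding gens_def using assms(6) by auto
  have G0c: "G0 \<subseteq> carrier G" unfolding G0_def using generate_incl[OF gensc] .
  have SM: "S \<subseteq> M"
  proof
    fix t assume t: "t \<in> S"
    then have "t = inv \<one> \<otimes> t \<otimes> \<one>" using assms(6) by auto
    then have "t \<in> gens" unfolding gens_def using \<open>t \<in> S\<close> by blast
    then have "t \<in> G0" unfolding G0_def by (rule generate.incl)
    then show "t \<in> M" unfolding Mdef using closure_of_subset[of G0 \<T>] G0c top by auto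
  qed
  have Kt: "\<exists>K. \<forall>ys\<in>C.Hl K. cl G t ys = \<one>" if t: "t \<in> S" for t
  proof (rule C.core_final)
    show "t \<in> M" using SM t by auto
    show "\<forall>y\<in>H. \<exists>n. cl G t (replicate n y) = \<one>"
      using assms(7) t Hc unfolding right_engel_def engel_comm_cl by blast
  qed
  obtain Kf where Kf: "\<forall>t\<in>S. \<forall>ys\<in>C.Hl (Kf t). cl G t ys = \<one>"
    using Kt by metis
  define K where "K = Max (insert 0 (Kf ` S))"
  have KS: "Kf t \<le> K" if "t \<in> S" for t
    unfolding K_def using assms(5) that by (auto intro: Max_ge)
  have allK: "cl G t ys \<in> {\<one>}" if t: "t \<in> S" and ys: "ys \<in> C.Hl K" for t ys
  proof -
    have "C.Hl (Kf t + (K - Kf t)) = C.Hl K" using KS[OF t] by simp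
    then have sp: "take (Kf t) ys \<in> C.Hl (Kf t)" "drop (Kf t) ys \<in> C.Hl (K - Kf t)"
      using C.Hl_split ys by metis+
    have "cl G t ys = cl G (cl G t (take (Kf t) ys)) (drop (Kf t) ys)"
      using cl_append[of G t "take (Kf t) ys" "drop (Kf t) ys"] by simp
    also have "\<dots> = cl G \<one> (drop (Kf t) ys)" using Kf t sp by auto
    also have "\<dots> = \<one>" using C.Hl_car[OF sp(2)] by simp
    finally show ?thesis by simp
  qed
  have h1: "C.hsub {\<one>}" unfolding C.hsub_def using A.M_one triv_subgroup C.H_car by auto
  have conjH: "\<forall>ls. set ls \<subseteq> carrier G \<and> length ls = K \<longrightarrow> cl G (cj G h t) ls = \<one>"
    if t: "t \<in> S" and h: "h \<in> H" for t h
  proof (rule dense_ext[OF tg hsd dense Hc])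
    show "cj G h t \<in> carrier G" by (rule cj_closed) (use t h Hc assms(6) in auto)
    show "\<forall>hs. set hs \<subseteq> H \<and> length hs = K \<longrightarrow> cl G (cj G h t) hs = \<one>"
      using C.cl_equiv[OF h1 _ _ h, of t K] SM t allK unfolding C.Hl_def by auto
  qed
  have conjL: "cl G (cj G g t) ls = \<one>"
    if t: "t \<in> S" and g: "g \<in> carrier G" and ls: "set ls \<subseteq> carrier G" "length ls = K" for t g ls
  proof -
    have tc: "t \<in> carrier G" using t assms(6) by auto
    define F where "F = {x \<in> topspace \<T>. cl G (cj G x t) ls \<in> {\<one>}}"
    have cF: "closedin \<T> F" unfolding F_def
      by (rule closed_one[OF tg hsd cont_cl[OF tg cont_cj[OF tg tc] ls(1)]])
    have "H \<subseteq> F" unfolding F_def using conjH[OF t] ls Hc top by auto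
    then have "carrier G \<subseteq> F" using closure_of_minimal[OF _ cF] dense by metis
    then show ?thesis using g unfolding F_def by auto
  qed
  have Mall: "\<forall>m\<in>M. \<forall>ys. set ys \<subseteq> carrier G \<longrightarrow> length ys = K \<longrightarrow> cl G m ys = \<one>"
  proof (intro ballI allI impI)
    fix m ls assume m: "m \<in> M" and lsc: "set ls \<subseteq> carrier G" and lsl: "length ls = K"
    have sg: "subgroup {m \<in> M. cl G m ls \<in> {\<one>}} G"
      by (rule A.pre_subgroup[OF triv_subgroup lsc])
    have "gens \<subseteq> {m \<in> M. cl G m ls \<in> {\<one>}}"
    proof
      fix x assume "x \<in> gens"
      then obtain g t where gt: "g \<in> carrier G" "t \<in> S" "x = inv g \<otimes> t \<otimes> g" unfolding gens_def by auto
      then have xe: "x = cj G g t" by (simp add: cj_def)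
      have "x \<in> M" using xe A.cj_M gt SM by auto
      then show "x \<in> {m \<in> M. cl G m ls \<in> {\<one>}}" using conjL[OF gt(2,1) lsc lsl] xe by auto
    qed
    then have "G0 \<subseteq> {m \<in> M. cl G m ls \<in> {\<one>}}"
      unfolding G0_def by (rule generate_subgroup_incl[OF _ sg])
    also have "\<dots> \<subseteq> {x \<in> topspace \<T>. cl G x ls \<in> {\<one>}}" using top A.M_car by auto
    finally have "M \<subseteq> {x \<in> topspace \<T>. cl G x ls \<in> {\<one>}}"
      unfolding Mdef by (rule closure_of_minimal[OF _ closed_one[OF tg hsd cont_cl[OF tg cont_id lsc]]])
    then show "cl G m ls = \<one>" using m by auto
  qed
  have "lower_central G (c + K) = {\<one>}" by (rule A.lc_final[OF lcM Mall])
  then show ?thesis unfolding nilpotent_group_def by blast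
qed

theorem lemma3p3:
  fixes p :: nat and L :: "('a, 'b) monoid_scheme" and \<T> :: "'a topology"
    and M S :: "'a set"
  assumes "Factorial_Ring.prime p"
    and "pro_p_group p L \<T>"
    and "top_fin_gen L \<T>"
    and "M \<lhd> L"
    and "\<forall>a \<in> M. \<forall>b \<in> M. a \<otimes>\<^bsub>L\<^esub> b = b \<otimes>\<^bsub>L\<^esub> a"
    and "finite S" and "S \<subseteq> carrier L"
    and "\<forall>t \<in> S. right_engel L t"
    and "M = top_normal_closure L \<T> S"
    and "nilpotent_group (L Mod M)"
  shows "nilpotent_group L"
proof -
  have grp: "group L" using assms(2) by (simp add: pro_p_group_def topological_group_def)
  show ?thesis by (rule group.main_aux[OF grp assms(2-10)])
qed



end
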